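(* Let $I=2$, $m_1,m_2>1$ integers, and $w_o,w_{m,1},w_{m,2},w_s\ge0$ with $w_o+w_{m,1}+w_{m,2}+w_s=1$. Define \[ u^*:=\sum_{l=1}^{2}\ \sum_{1\le i_1<\dots<i_l\le 2}\Big\{\Big(w_o+\sum_{j\in\{1,2\}\setminus\{i_1,\dots,i_l\}}w_{m,j}\Big)\prod_{t=1}^l (m_{i_t}-1)\Big\}. \] Then the condition $u^*<1/2$ is equivalent to \[ (m_1m_2-1)w_o+(m_1-1)w_{m,2}+(m_2-1)w_{m,1}<\tfrac12 . \] In particular, under this inequality, for the covariate-adaptive randomization procedure described in the context with two covariates having $m_1$ and $m_2$ levels, $(\mathbf{D}_n)_{n\ge1}$ is a positive recurrent Markov chain on $\mathbb{Z}^{m_1m_2}$.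
   Context: Two treatments, labelled 1 and 2; two covariates with $m_1$ and $m_2$ levels; strata are pairs $(k_1,k_2)$, margins $(i;k_i)$ are patients whose $i$-th covariate is at level $k_i$. Covariate profiles $Z_1,Z_2,\dots$ of sequentially arriving patients are i.i.d. multinomial over strata. For the first $n$ patients $D_n$, $D_n(i;k_i)$, $D_n(k_1,k_2)$ denote (number on treatment 1) minus (number on treatment 2) overall, in margin $(i;k_i)$, and in stratum $(k_1,k_2)$; $\mathbf{D}_n$ is the array of within-stratum differences. Procedure: fix $0<q<p<1$, $p+q=1$. Patient 1 gets treatment 1 with probability $1/2$. For $n>1$, with patient $n$ in stratum $(k_1^*,k_2^* )$, $\mathit{Imb}_n^{(1)}=w_o(D_{n-1}+1)^2+\sum_{i=1}^2 w_{m,i}(D_{n-1}(i;k_i^* )+1)^2+w_s(D_{n-1}(k_1^*,k_2^* )+1)^2$ and $\mathit{Imb}_n^{(2)}$ the same with $-1$ in place of $+1$; patient $n$ gets treatment 1 with probability $q$, $p$, or $1/2$ according as $\mathit{Imb}_n^{(1)}>$, $<$, or $=\mathit{Imb}_n^{(2)}$. *)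

theory Defs
  imports "HOL-Probability.Probability"
begin

primrec n_step :: "('s \<Rightarrow> 's pmf) \<Rightarrow> nat \<Rightarrow> 's \<Rightarrow> 's pmf" where
  "n_step K 0 x = return_pmf x"
| "n_step K (Suc n) x = bind_pmf (n_step K n x) K"

fun first_hit :: "('s \<Rightarrow> 's pmf) \<Rightarrow> nat \<Rightarrow> 's \<Rightarrow> 's \<Rightarrow> real" where
  "first_hit K 0 x y = 0"
| "first_hit K (Suc 0) x y = pmf (K x) y"
| "first_hit K (Suc (Suc n)) x y =
     measure_pmf.expectation (K x) (\<lambda>z. if z = y then 0 else first_hit K (Suc n) z y)"

definition pos_recurrent_state :: "('s \<Rightarrow> 's pmf) \<Rightarrow> 's \<Rightarrow> bool" where
  "pos_recurrent_state K x \<longleftrightarrow>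
     (\<lambda>n. first_hit K n x x) sums 1 \<and> summable (\<lambda>n. real n * first_hit K n x x)"

definition pos_recurrent_chain :: "('s \<Rightarrow> 's pmf) \<Rightarrow> 's \<Rightarrow> bool" where
  "pos_recurrent_chain K x0 \<longleftrightarrow>
     (\<forall>y. (\<exists>n\<ge>1. pmf (n_step K n x0) y > 0) \<longrightarrow> pos_recurrent_state K y)"

definition strata :: "(nat \<Rightarrow> nat) \<Rightarrow> (nat \<times> nat) set" where
  "strata m = {1..m 1} \<times> {1..m 2}"

(* state: array of within-stratum differences, D :: (nat*nat) => int (zero off strata) *)
definition overall_diff :: "(nat \<Rightarrow> nat) \<Rightarrow> (nat \<times> nat \<Rightarrow> int) \<Rightarrow> int" where
  "overall_diff m D = (\<Sum>s\<in>strata m. D s)"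

definition margin_diff :: "(nat \<Rightarrow> nat) \<Rightarrow> (nat \<times> nat \<Rightarrow> int) \<Rightarrow> nat \<Rightarrow> nat \<Rightarrow> int" where
  "margin_diff m D i k =
     (if i = 1 then (\<Sum>k2\<in>{1..m 2}. D (k, k2)) else (\<Sum>k1\<in>{1..m 1}. D (k1, k)))"

(* Imb^{(1)} (sg = 1) and Imb^{(2)} (sg = -1) for a new patient in stratum s *)
definition Imb :: "real \<Rightarrow> (nat \<Rightarrow> real) \<Rightarrow> real \<Rightarrow> (nat \<Rightarrow> nat) \<Rightarrow>
    (nat \<times> nat \<Rightarrow> int) \<Rightarrow> nat \<times> nat \<Rightarrow> int \<Rightarrow> real" where
  "Imb wo wm ws m D s sg =
     wo * (real_of_int (overall_diff m D + sg))\<^sup>2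
     + (\<Sum>i\<in>{1,2}. wm i * (real_of_int (margin_diff m D i (if i = 1 then fst s else snd s) + sg))\<^sup>2)
     + ws * (real_of_int (D s + sg))\<^sup>2"

definition prob_trt1 :: "real \<Rightarrow> real \<Rightarrow> real \<Rightarrow> (nat \<Rightarrow> real) \<Rightarrow> real \<Rightarrow> (nat \<Rightarrow> nat) \<Rightarrow>
    (nat \<times> nat \<Rightarrow> int) \<Rightarrow> nat \<times> nat \<Rightarrow> real" where
  "prob_trt1 p q wo wm ws m D s =
     (let I1 = Imb wo wm ws m D s 1; I2 = Imb wo wm ws m D s (-1)
      in if I1 > I2 then q else if I1 < I2 then p else 1/2)"

definition car_kernel :: "real \<Rightarrow> real \<Rightarrow> real \<Rightarrow> (nat \<Rightarrow> real) \<Rightarrow> real \<Rightarrow> (nat \<Rightarrow> nat) \<Rightarrow>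
    (nat \<times> nat) pmf \<Rightarrow> (nat \<times> nat \<Rightarrow> int) \<Rightarrow> (nat \<times> nat \<Rightarrow> int) pmf" where
  "car_kernel p q wo wm ws m \<pi> D =
     bind_pmf \<pi> (\<lambda>s. bind_pmf (bernoulli_pmf (prob_trt1 p q wo wm ws m D s))
        (\<lambda>t. return_pmf (if t then D(s := D s + 1) else D(s := D s - 1))))"

definition u_star :: "real \<Rightarrow> (nat \<Rightarrow> real) \<Rightarrow> (nat \<Rightarrow> nat) \<Rightarrow> real" where
  "u_star wo wm m =
     (\<Sum>S\<in>{S. S \<subseteq> {1,2::nat} \<and> S \<noteq> {}}.
        (wo + (\<Sum>j\<in>{1,2} - S. wm j)) * (\<Prod>t\<in>S. real (m t) - 1))"

end

theory Submission
  imports Defs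
begin

locale car =
  fixes p q wo ws :: real and wm :: "nat \<Rightarrow> real" and m :: "nat \<Rightarrow> nat"
    and \<pi> :: "(nat \<times> nat) pmf"
  assumes m1: "m 1 \<ge> 1" and m2: "m 2 \<ge> 1"
    and nn: "wo \<ge> 0" "wm 1 \<ge> 0" "wm 2 \<ge> 0" and ws_pos: "ws > 0"
    and wsum: "wo + wm 1 + wm 2 + ws = 1"
    and pq: "0 < q" "q < p" "p < 1" "p + q = 1"
    and supp: "set_pmf \<pi> = strata m"
begin

abbreviation "K \<equiv> car_kernel p q wo wm ws m \<pi>"
definition "Pr x s = prob_trt1 p q wo wm ws m x s"
definition "up x s = x(s := x s + 1)"
definition "dn x s = x(s := x s - 1)"

lemma fin_strata[simp]: "finite (strata m)"
  by (simp add: strata_def)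

lemma Pr_bounds: "q \<le> Pr x s" "Pr x s \<le> p" "0 \<le> Pr x s" "Pr x s \<le> 1"
  using pq by (auto simp: Pr_def prob_trt1_def Let_def)

lemma K_exp: "measure_pmf.expectation (K x) h =
   (\<Sum>s\<in>strata m. pmf \<pi> s * (Pr x s * h (up x s) + (1 - Pr x s) * h (dn x s)))"
proof -
  have inner: "measure_pmf.expectation (bind_pmf (bernoulli_pmf (Pr x s))
        (\<lambda>t. return_pmf (if t then x(s := x s + 1) else x(s := x s - 1)))) h
      = Pr x s * h (up x s) + (1 - Pr x s) * h (dn x s)" for s
    by (subst pmf_expectation_bind[where A=UNIV])
       (auto simp: UNIV_bool Pr_bounds up_def dn_def)
  show ?thesis
    unfolding car_kernel_def Pr_def[symmetric]
    apply (subst pmf_expectation_bind[where A="strata m"])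
    using supp by (auto simp: inner)
qed


lemma upd_eq: "((x::_ \<Rightarrow> int)(s := x s + c)) t = x t + (if t = s then c else 0)"
  by auto

lemma overall_upd: "s \<in> strata m \<Longrightarrow> overall_diff m (x(s := x s + c)) = overall_diff m x + c"
  unfolding overall_diff_def upd_eq by (simp add: sum.distrib)

lemma margin1_upd: "s \<in> strata m \<Longrightarrow>
   margin_diff m (x(s := x s + c)) 1 k = margin_diff m x 1 k + (if k = fst s then c else 0)"
  unfolding margin_diff_def upd_eq
  by (cases s) (auto simp: sum.distrib strata_def)

lemma margin2_upd: "s \<in> strata m \<Longrightarrow>
   margin_diff m (x(s := x s + c)) 2 k = margin_diff m x 2 k + (if k = snd s then c else 0)"
  unfolding margin_diff_def upd_eq
  by (cases s) (auto simp: sum.distrib strata_def)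

definition "Ox x = real_of_int (overall_diff m x)"
definition "Mg x i k = real_of_int (margin_diff m x i k)"
definition "V x = wo * (Ox x)\<^sup>2 + wm 1 * (\<Sum>k\<in>{1..m 1}. (Mg x 1 k)\<^sup>2)
   + wm 2 * (\<Sum>k\<in>{1..m 2}. (Mg x 2 k)\<^sup>2) + ws * (\<Sum>t\<in>strata m. (real_of_int (x t))\<^sup>2)"
definition "g x s = wo * Ox x + wm 1 * Mg x 1 (fst s) + wm 2 * Mg x 2 (snd s) + ws * real_of_int (x s)"

lemma sq_sum_upd:
  fixes f :: "'b \<Rightarrow> real"
  assumes "finite A" "a \<in> A"
  shows "(\<Sum>k\<in>A. (f k + (if k = a then c else 0))\<^sup>2) = (\<Sum>k\<in>A. (f k)\<^sup>2) + 2*c*f a + c\<^sup>2"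
proof -
  have "(\<Sum>k\<in>A. (f k + (if k = a then c else 0))\<^sup>2) =
     (\<Sum>k\<in>A. (f k)\<^sup>2 + (if k = a then 2*c*f k + c\<^sup>2 else 0))"
    by (rule sum.cong) (auto simp: power2_eq_square algebra_simps)
  also have "\<dots> = (\<Sum>k\<in>A. (f k)\<^sup>2) + 2*c*f a + c\<^sup>2"
    using assms by (simp add: sum.distrib)
  finally show ?thesis .
qed

lemma V_step:
  assumes s: "s \<in> strata m" and c: "c = 1 \<or> c = -1"
  shows "V (x(s := x s + c)) = V x + 2 * real_of_int c * g x s + 1"
proof -
  have c2: "(real_of_int c)\<^sup>2 = 1" using c by auto
  have s1: "fst s \<in> {1..m 1}" and s2: "snd s \<in> {1..m 2}" using s by (auto simp: strata_def)
  have e1: "(\<Sum>k\<in>{1..m 1}. (Mg (x(s := x s + c)) 1 k)\<^sup>2) = (\<Sum>k\<in>{1..m 1}. (Mg x 1 k)\<^sup>2) + 2*real_of_int c*Mg x 1 (fst s) + 1"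
  proof -
    have "(\<Sum>k\<in>{1..m 1}. (Mg (x(s := x s + c)) 1 k)\<^sup>2) = (\<Sum>k\<in>{1..m 1}. (Mg x 1 k + (if k = fst s then real_of_int c else 0))\<^sup>2)"
      by (rule sum.cong) (use margin1_upd[OF s, of x c] in \<open>auto simp: Mg_def\<close>)
    also have "\<dots> = (\<Sum>k\<in>{1..m 1}. (Mg x 1 k)\<^sup>2) + 2*real_of_int c*Mg x 1 (fst s) + 1"
      using sq_sum_upd[OF _ s1, of "Mg x 1" "real_of_int c"] c2 by simp
    finally show ?thesis .
  qed
  have e2: "(\<Sum>k\<in>{1..m 2}. (Mg (x(s := x s + c)) 2 k)\<^sup>2) = (\<Sum>k\<in>{1..m 2}. (Mg x 2 k)\<^sup>2) + 2*real_of_int c*Mg x 2 (snd s) + 1"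
  proof -
    have "(\<Sum>k\<in>{1..m 2}. (Mg (x(s := x s + c)) 2 k)\<^sup>2) = (\<Sum>k\<in>{1..m 2}. (Mg x 2 k + (if k = snd s then real_of_int c else 0))\<^sup>2)"
      by (rule sum.cong) (use margin2_upd[OF s, of x c] in \<open>auto simp: Mg_def\<close>)
    also have "\<dots> = (\<Sum>k\<in>{1..m 2}. (Mg x 2 k)\<^sup>2) + 2*real_of_int c*Mg x 2 (snd s) + 1"
      using sq_sum_upd[OF _ s2, of "Mg x 2" "real_of_int c"] c2 by simp
    finally show ?thesis .
  qed
  have e3: "(\<Sum>t\<in>strata m. (real_of_int ((x(s := x s + c)) t))\<^sup>2) = (\<Sum>t\<in>strata m. (real_of_int (x t))\<^sup>2) + 2*real_of_int c*real_of_int (x s) + 1"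
    using sq_sum_upd[OF fin_strata s, of "\<lambda>t. real_of_int (x t)" "real_of_int c"] c2
    by (simp only: upd_eq of_int_add if_distrib of_int_0)
  have e0: "(Ox (x(s := x s + c)))\<^sup>2 = (Ox x)\<^sup>2 + 2 * real_of_int c * Ox x + 1"
  proof -
    have "Ox (x(s := x s + c)) = Ox x + real_of_int c" by (simp add: Ox_def overall_upd[OF s])
    then show ?thesis using c2 by (simp add: power2_eq_square algebra_simps)
  qed
  show ?thesis
    unfolding V_def e0 e1 e2 e3 g_def using wsum
    by (simp add: algebra_simps)
qed

lemma Imb_diff: "Imb wo wm ws m x s 1 - Imb wo wm ws m x s (-1) = 4 * g x s"
  unfolding Imb_def g_def Ox_def Mg_def
  by (simp add: power2_eq_square algebra_simps)


lemma Pr_g: "Pr x s = (if g x s > 0 then q else if g x s < 0 then p else 1/2)"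
  using Imb_diff[of x s] unfolding Pr_def prob_trt1_def Let_def by auto

lemma sum_pi: "(\<Sum>s\<in>strata m. pmf \<pi> s) = 1"
  using supp by (intro sum_pmf_eq_1) auto

lemma drift_s:
  assumes s: "s \<in> strata m"
  shows "Pr x s * V (up x s) + (1 - Pr x s) * V (dn x s) \<le> V x + 1 - 2*(p-q)*\<bar>g x s\<bar>"
proof -
  have u: "V (up x s) = V x + 2 * g x s + 1" using V_step[OF s, of 1 x] by (simp add: up_def)
  have d: "V (dn x s) = V x - 2 * g x s + 1" using V_step[OF s, of "-1" x] by (simp add: dn_def)
  have key: "(2 * Pr x s - 1) * g x s \<le> -(p-q)*\<bar>g x s\<bar>"
  proof -
    consider "g x s > 0" | "g x s < 0" | "g x s = 0" by linarith
    then show ?thesis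
    proof cases
      case 1
      then have "Pr x s = q" by (simp add: Pr_g)
      moreover have "2 * q - 1 = -(p - q)" using pq by simp
      ultimately show ?thesis using 1 by simp
    next
      case 2
      then have "Pr x s = p" by (simp add: Pr_g)
      moreover have e: "2 * p - 1 = (p - q)" using pq by simp
      moreover have "\<bar>g x s\<bar> = - g x s" using 2 by simp
      ultimately show ?thesis by (simp only: e)
    qed simp
  qed
  have "Pr x s * V (up x s) + (1 - Pr x s) * V (dn x s) = V x + 1 + 2 * ((2 * Pr x s - 1) * g x s)"
    unfolding u d by (simp add: algebra_simps)
  then show ?thesis using key by linarith
qed

lemma KV: "measure_pmf.expectation (K x) V \<le> V x + 1 - 2*(p-q)*(\<Sum>s\<in>strata m. pmf \<pi> s * \<bar>g x s\<bar>)"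
proof -
  have "measure_pmf.expectation (K x) V \<le> (\<Sum>s\<in>strata m. pmf \<pi> s * (V x + 1 - 2*(p-q)*\<bar>g x s\<bar>))"
    unfolding K_exp by (intro sum_mono mult_left_mono drift_s) auto
  also have "\<dots> = (\<Sum>s\<in>strata m. pmf \<pi> s) * (V x + 1) - 2*(p-q)*(\<Sum>s\<in>strata m. pmf \<pi> s * \<bar>g x s\<bar>)"
    by (simp add: sum_distrib_left sum_distrib_right sum_subtractf sum.distrib algebra_simps)
  finally show ?thesis using sum_pi by simp
qed

lemma sum_gx: "(\<Sum>s\<in>strata m. g x s * real_of_int (x s)) =
   wo * (Ox x)\<^sup>2 + wm 1 * (\<Sum>k\<in>{1..m 1}. (Mg x 1 k)\<^sup>2)
   + wm 2 * (\<Sum>k\<in>{1..m 2}. (Mg x 2 k)\<^sup>2) + ws * (\<Sum>t\<in>strata m. (real_of_int (x t))\<^sup>2)"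
proof -
  have a: "(\<Sum>s\<in>strata m. Ox x * real_of_int (x s)) = (Ox x)\<^sup>2"
    by (simp add: Ox_def overall_diff_def sum_distrib_left[symmetric] power2_eq_square)
  have b: "(\<Sum>s\<in>strata m. Mg x 1 (fst s) * real_of_int (x s)) = (\<Sum>k\<in>{1..m 1}. (Mg x 1 k)\<^sup>2)"
  proof -
    have "(\<Sum>s\<in>strata m. Mg x 1 (fst s) * real_of_int (x s)) =
        (\<Sum>a\<in>{1..m 1}. \<Sum>b\<in>{1..m 2}. Mg x 1 a * real_of_int (x (a,b)))"
      unfolding strata_def sum.cartesian_product by (simp add: case_prod_beta)
    also have "\<dots> = (\<Sum>k\<in>{1..m 1}. (Mg x 1 k)\<^sup>2)"
      by (simp add: sum_distrib_left[symmetric] power2_eq_square Mg_def margin_diff_def)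
    finally show ?thesis .
  qed
  have c: "(\<Sum>s\<in>strata m. Mg x 2 (snd s) * real_of_int (x s)) = (\<Sum>k\<in>{1..m 2}. (Mg x 2 k)\<^sup>2)"
  proof -
    have "(\<Sum>s\<in>strata m. Mg x 2 (snd s) * real_of_int (x s)) =
        (\<Sum>a\<in>{1..m 1}. \<Sum>b\<in>{1..m 2}. Mg x 2 b * real_of_int (x (a,b)))"
      unfolding strata_def sum.cartesian_product by (simp add: case_prod_beta)
    also have "\<dots> = (\<Sum>b\<in>{1..m 2}. \<Sum>a\<in>{1..m 1}. Mg x 2 b * real_of_int (x (a,b)))"
      by (rule sum.swap)
    also have "\<dots> = (\<Sum>k\<in>{1..m 2}. (Mg x 2 k)\<^sup>2)"
      by (simp add: sum_distrib_left[symmetric] power2_eq_square Mg_def margin_diff_def)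
    finally show ?thesis .
  qed
  have d: "(\<Sum>s\<in>strata m. real_of_int (x s) * real_of_int (x s)) = (\<Sum>t\<in>strata m. (real_of_int (x t))\<^sup>2)"
    by (simp add: power2_eq_square)
  show ?thesis
    unfolding g_def distrib_right sum.distrib mult.assoc sum_distrib_left[symmetric] b c d
    by (simp add: Ox_def overall_diff_def power2_eq_square)
qed

lemma g_lower:
  assumes s0: "s0 \<in> strata m" and mx: "\<forall>s\<in>strata m. \<bar>x s\<bar> \<le> \<bar>x s0\<bar>"
  shows "ws * \<bar>real_of_int (x s0)\<bar> \<le> (\<Sum>s\<in>strata m. \<bar>g x s\<bar>)"
proof (cases "x s0 = 0")
  case True then show ?thesis by (simp add: sum_nonneg)
next
  case False
  let ?a = "\<bar>real_of_int (x s0)\<bar>"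
  have "ws * ?a * ?a = ws * (real_of_int (x s0))\<^sup>2" by (simp add: power2_eq_square)
  also have "\<dots> \<le> ws * (\<Sum>t\<in>strata m. (real_of_int (x t))\<^sup>2)"
    using ws_pos s0 by (intro mult_left_mono member_le_sum) auto
  also have "\<dots> \<le> (\<Sum>s\<in>strata m. g x s * real_of_int (x s))"
    unfolding sum_gx using nn by (simp add: sum_nonneg)
  also have "\<dots> \<le> (\<Sum>s\<in>strata m. \<bar>g x s\<bar> * ?a)"
  proof (intro sum_mono)
    fix s assume "s \<in> strata m"
    then have "\<bar>real_of_int (x s)\<bar> \<le> ?a" using mx by auto
    then have "g x s * real_of_int (x s) \<le> \<bar>g x s\<bar> * \<bar>real_of_int (x s)\<bar>"
      by (simp add: abs_mult[symmetric])
    also have "\<dots> \<le> \<bar>g x s\<bar> * ?a" using \<open>\<bar>real_of_int (x s)\<bar> \<le> ?a\<close> by (intro mult_left_mono) auto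
    finally show "g x s * real_of_int (x s) \<le> \<bar>g x s\<bar> * ?a" .
  qed
  also have "\<dots> = (\<Sum>s\<in>strata m. \<bar>g x s\<bar>) * ?a" by (simp add: sum_distrib_right)
  finally show ?thesis using False by simp
qed


definition "G = {x::nat\<times>nat\<Rightarrow>int. \<forall>s. s \<notin> strata m \<longrightarrow> x s = 0}"

lemma up_G: "x \<in> G \<Longrightarrow> s \<in> strata m \<Longrightarrow> up x s \<in> G"
  and dn_G: "x \<in> G \<Longrightarrow> s \<in> strata m \<Longrightarrow> dn x s \<in> G"
  by (auto simp: G_def up_def dn_def)

definition Q :: "(nat\<times>nat\<Rightarrow>int) \<Rightarrow> ((nat\<times>nat\<Rightarrow>int) \<Rightarrow> real) \<Rightarrow> (nat\<times>nat\<Rightarrow>int) \<Rightarrow> real"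
  where "Q y f x = measure_pmf.expectation (K x) (\<lambda>z. if z = y then 0 else f z)"

lemma Q_eq: "Q y f x = (\<Sum>s\<in>strata m. pmf \<pi> s * (Pr x s * (if up x s = y then 0 else f (up x s))
     + (1 - Pr x s) * (if dn x s = y then 0 else f (dn x s))))"
  unfolding Q_def K_exp by simp

lemma Q_lin: "Q y (\<lambda>z. a * f z + b * h z) = (\<lambda>x. a * Q y f x + b * Q y h x)"
proof (rule ext)
  fix x
  show "Q y (\<lambda>z. a * f z + b * h z) x = a * Q y f x + b * Q y h x"
    unfolding Q_eq sum_distrib_left sum.distrib[symmetric]
    by (intro sum.cong refl) (auto simp: algebra_simps)
qed

lemma Q_mono:
  assumes "x \<in> G" "\<forall>z\<in>G. f z \<le> h z"
  shows "Q y f x \<le> Q y h x"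
  unfolding Q_eq using assms Pr_bounds[of x] up_G[OF assms(1)] dn_G[OF assms(1)]
  by (intro sum_mono mult_left_mono add_mono) auto

lemma Q_nonneg:
  assumes "x \<in> G" "\<forall>z\<in>G. 0 \<le> f z"
  shows "0 \<le> Q y f x"
  using Q_mono[OF assms(1), of "\<lambda>_. 0" f y] assms(2) by (simp add: Q_eq)

lemma Q_le1:
  assumes "x \<in> G" "\<forall>z\<in>G. f z \<le> 1"
  shows "Q y f x \<le> 1"
proof -
  have "Q y f x \<le> (\<Sum>s\<in>strata m. pmf \<pi> s * (Pr x s * 1 + (1 - Pr x s) * 1))"
    unfolding Q_eq using assms Pr_bounds[of x] up_G[OF assms(1)] dn_G[OF assms(1)]
    by (intro sum_mono mult_left_mono add_mono) auto
  then show ?thesis using sum_pi by simp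
qed

lemma V_nonneg: "0 \<le> V x"
  unfolding V_def using nn ws_pos by (intro add_nonneg_nonneg mult_nonneg_nonneg sum_nonneg) auto

lemma Q_V: "Q y V x \<le> measure_pmf.expectation (K x) V"
  unfolding Q_eq K_exp using Pr_bounds[of x] V_nonneg
  by (intro sum_mono mult_left_mono add_mono) auto

lemma Qn_lin: "(Q y ^^ n) (\<lambda>z. a * f z + b * h z) = (\<lambda>x. a * (Q y ^^ n) f x + b * (Q y ^^ n) h x)"
  by (induction n) (simp_all add: Q_lin)

lemma Qn_mono:
  assumes "\<forall>z\<in>G. f z \<le> h z"
  shows "x \<in> G \<Longrightarrow> (Q y ^^ n) f x \<le> (Q y ^^ n) h x"
proof (induction n arbitrary: x)
  case 0 then show ?case using assms by simp
next
  case (Suc n) then show ?case by (simp add: Q_mono)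
qed

definition r :: "(nat\<times>nat\<Rightarrow>int) \<Rightarrow> nat \<Rightarrow> (nat\<times>nat\<Rightarrow>int) \<Rightarrow> real"
  where "r y n = (Q y ^^ n) (\<lambda>_. 1)"

lemma r_Suc: "r y (Suc n) = Q y (r y n)"
  by (simp add: r_def)

lemma r_bounds: "x \<in> G \<Longrightarrow> 0 \<le> r y n x \<and> r y n x \<le> 1"
proof (induction n arbitrary: x)
  case 0 then show ?case by (simp add: r_def)
next
  case (Suc n) then show ?case unfolding r_Suc by (simp add: Q_nonneg Q_le1)
qed

lemma r_dec: "x \<in> G \<Longrightarrow> r y (Suc n) x \<le> r y n x"
proof (induction n arbitrary: x)
  case 0 then show ?case using Q_le1[of x "\<lambda>_. 1" y] by (simp add: r_def)
next
  case (Suc n) then show ?case unfolding r_Suc[of y "Suc n"] r_Suc[of y n]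
    by (intro Q_mono) auto
qed

lemma r_antimono: "x \<in> G \<Longrightarrow> L \<le> k \<Longrightarrow> r y k x \<le> r y L x"
proof -
  assume x: "x \<in> G" and "L \<le> k"
  have "r y (L + d) x \<le> r y L x" for d
  proof (induction d)
    case (Suc d) then show ?case using r_dec[OF x, of y "L + d"] by simp
  qed simp
  then show ?thesis using \<open>L \<le> k\<close> by (metis le_add_diff_inverse)
qed

lemma first_hit_r: "first_hit K (Suc n) x y = r y n x - r y (Suc n) x"
proof (induction n arbitrary: x)
  case 0
  have "pmf (K x) y = measure_pmf.expectation (K x) (indicator {y})"
    by (simp add: measure_pmf_single)
  also have "\<dots> = 1 - Q y (\<lambda>_. 1) x"
  proof -
    have "measure_pmf.expectation (K x) (indicator {y}) + Q y (\<lambda>_. 1) x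
       = (\<Sum>s\<in>strata m. pmf \<pi> s * (Pr x s + (1 - Pr x s)))"
      unfolding Q_def K_exp sum.distrib[symmetric]
      by (intro sum.cong refl) (auto simp: algebra_simps indicator_def)
    then show ?thesis using sum_pi by simp
  qed
  finally show ?case by (simp add: r_def)
next
  case (Suc n)
  have e: "(\<lambda>z. if z = y then 0 else first_hit K (Suc n) z y) =
     (\<lambda>z. if z = y then 0 else 1 * r y n z + (-1) * r y (Suc n) z)"
    using Suc.IH by auto
  have "first_hit K (Suc (Suc n)) x y = Q y (\<lambda>z. 1 * r y n z + (-1) * r y (Suc n) z) x"
    unfolding Q_def first_hit.simps(3) e ..
  also have "\<dots> = r y (Suc n) x - r y (Suc (Suc n)) x"
    unfolding Q_lin r_Suc[of y "Suc n"] r_Suc[of y n] by simp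
  finally show ?case .
qed


lemma strata_ne: "(1,1) \<in> strata m"
  using m1 m2 by (simp add: strata_def)

definition "pmin = Min (pmf \<pi> ` strata m)"

lemma pmf_pos: "s \<in> strata m \<Longrightarrow> 0 < pmf \<pi> s"
  using supp by (metis pmf_positive)

lemma pmin_le: "s \<in> strata m \<Longrightarrow> pmin \<le> pmf \<pi> s"
  unfolding pmin_def by (intro Min_le) auto

lemma pmin_pos: "0 < pmin"
proof -
  have "pmin \<in> pmf \<pi> ` strata m" unfolding pmin_def
    using strata_ne by (intro Min_in) auto
  then show ?thesis using pmf_pos by auto
qed

lemma pmin_le1: "pmin \<le> 1"
  using pmin_le[OF strata_ne] pmf_le_1[of \<pi> "(1,1)"] by linarith

definition "R0 = 1 / ((p - q) * pmin * ws)"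
definition "Rn = nat \<lceil>R0\<rceil>"
definition "C = {x. \<forall>s\<in>strata m. \<bar>x s\<bar> \<le> int Rn}"
definition indC :: "(nat\<times>nat\<Rightarrow>int) \<Rightarrow> real" where "indC x = (if x \<in> C then 1 else 0)"

lemma drift: "Q y V x \<le> V x - 1 + 2 * indC x"
proof -
  let ?S = "(\<Sum>s\<in>strata m. pmf \<pi> s * \<bar>g x s\<bar>)"
  have h: "Q y V x \<le> V x + 1 - 2*(p-q)*?S" using Q_V KV by (rule order_trans)
  have S0: "0 \<le> ?S" by (simp add: sum_nonneg)
  have pq0: "0 < p - q" using pq by simp
  show ?thesis
  proof (cases "x \<in> C")
    case True
    then show ?thesis using h S0 pq0 by (simp add: indC_def) (smt (verit) mult_nonneg_nonneg)
  next
    case False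
    then obtain s1 where s1: "s1 \<in> strata m" "\<bar>x s1\<bar> > int Rn" by (auto simp: C_def not_le)
    define M where "M = Max ((\<lambda>s. \<bar>x s\<bar>) ` strata m)"
    have "M \<in> (\<lambda>s. \<bar>x s\<bar>) ` strata m" unfolding M_def using s1 by (intro Min_in Max_in) auto
    then obtain s0 where s0: "s0 \<in> strata m" "\<bar>x s0\<bar> = M" by auto
    have mx: "\<forall>s\<in>strata m. \<bar>x s\<bar> \<le> \<bar>x s0\<bar>" unfolding s0 M_def by auto
    have "\<bar>x s1\<bar> \<le> \<bar>x s0\<bar>" using mx s1 by auto
    then have "real Rn < \<bar>real_of_int (x s0)\<bar>" using s1 by linarith
    moreover have "R0 \<le> real Rn" unfolding Rn_def by linarith
    ultimately have big: "R0 \<le> \<bar>real_of_int (x s0)\<bar>" by linarith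
    have "pmin * (ws * \<bar>real_of_int (x s0)\<bar>) \<le> pmin * (\<Sum>s\<in>strata m. \<bar>g x s\<bar>)"
      using g_lower[OF s0(1) mx] pmin_pos by (intro mult_left_mono) auto
    also have "\<dots> \<le> ?S" unfolding sum_distrib_left
      by (intro sum_mono mult_right_mono pmin_le) auto
    finally have S1: "pmin * ws * \<bar>real_of_int (x s0)\<bar> \<le> ?S" by (simp add: mult.assoc)
    have "1 = (p - q) * pmin * ws * R0" unfolding R0_def using pq0 pmin_pos ws_pos by simp
    also have "\<dots> \<le> (p - q) * pmin * ws * \<bar>real_of_int (x s0)\<bar>"
      using big pq0 pmin_pos ws_pos by (intro mult_left_mono) auto
    also have "\<dots> \<le> (p - q) * ?S" using S1 pq0 by (simp add: mult.assoc mult_left_mono)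
    finally have "1 \<le> (p - q) * ?S" .
    moreover have "2*(p-q)*?S = 2*((p-q)*?S)" by simp
    moreover have "indC x = 0" using False by (simp add: indC_def)
    ultimately show ?thesis using h by linarith
  qed
qed


definition "cc = pmin * q"

lemma cc_pos: "0 < cc" and cc_le1: "cc \<le> 1"
  using pmin_pos pmin_le1 pq unfolding cc_def
  by (auto intro: mult_le_one)

lemma Qsum_bound:
  assumes x: "x \<in> G" and s0: "s0 \<in> strata m" and f1: "\<forall>z\<in>G. f z \<le> 1" and a: "0 \<le> a"
    and hyp: "(if up x s0 = y then 0 else f (up x s0)) \<le> 1 - a \<or>
              (if dn x s0 = y then 0 else f (dn x s0)) \<le> 1 - a"
  shows "Q y f x \<le> 1 - cc * a"
proof -
  define T where "T s = Pr x s * (if up x s = y then 0 else f (up x s))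
     + (1 - Pr x s) * (if dn x s = y then 0 else f (dn x s))" for s
  have T_le: "T s \<le> 1 - (if s = s0 then q * a else 0)" if s: "s \<in> strata m" for s
  proof -
    have u1: "(if up x s = y then 0 else f (up x s)) \<le> 1" using f1 up_G[OF x s] by auto
    have d1: "(if dn x s = y then 0 else f (dn x s)) \<le> 1" using f1 dn_G[OF x s] by auto
    have P: "q \<le> Pr x s" "Pr x s \<le> p" "0 \<le> Pr x s" "Pr x s \<le> 1" by (rule Pr_bounds)+
    show ?thesis
    proof (cases "s = s0")
      case False
      have "T s \<le> Pr x s * 1 + (1 - Pr x s) * 1" unfolding T_def
        using u1 d1 P by (intro add_mono mult_left_mono) auto
      then show ?thesis using False by simp
    next
      case True
      from hyp show ?thesis
      proof
        assume h: "(if up x s0 = y then 0 else f (up x s0)) \<le> 1 - a"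
        have "T s \<le> Pr x s * (1 - a) + (1 - Pr x s) * 1" unfolding T_def
          using h d1 P True by (intro add_mono mult_left_mono) auto
        moreover have "q * a \<le> Pr x s * a" using P a by (intro mult_right_mono) auto
        ultimately show ?thesis using True by (simp add: algebra_simps)
      next
        assume h: "(if dn x s0 = y then 0 else f (dn x s0)) \<le> 1 - a"
        have "T s \<le> Pr x s * 1 + (1 - Pr x s) * (1 - a)" unfolding T_def
          using h u1 P True by (intro add_mono mult_left_mono) auto
        moreover have "q * a \<le> (1 - Pr x s) * a" using P a pq by (intro mult_right_mono) auto
        ultimately show ?thesis using True by (simp add: algebra_simps)
      qed
    qed
  qed
  have "Q y f x = (\<Sum>s\<in>strata m. pmf \<pi> s * T s)" unfolding Q_eq T_def ..
  also have "\<dots> \<le> (\<Sum>s\<in>strata m. pmf \<pi> s * (1 - (if s = s0 then q * a else 0)))"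
    using T_le by (intro sum_mono mult_left_mono) auto
  also have "\<dots> = (\<Sum>s\<in>strata m. pmf \<pi> s) - pmf \<pi> s0 * (q * a)"
  proof -
    have "(\<Sum>s\<in>strata m. pmf \<pi> s * (1 - (if s = s0 then q * a else 0)))
        = (\<Sum>s\<in>strata m. pmf \<pi> s - (if s = s0 then pmf \<pi> s0 * (q * a) else 0))"
      by (intro sum.cong) (auto simp: right_diff_distrib)
    also have "\<dots> = (\<Sum>s\<in>strata m. pmf \<pi> s) - pmf \<pi> s0 * (q * a)"
      using s0 by (simp add: sum_subtractf)
    finally show ?thesis .
  qed
  also have "\<dots> \<le> 1 - cc * a"
  proof -
    have "pmin * (q * a) \<le> pmf \<pi> s0 * (q * a)"
      using pmin_le[OF s0] pq a by (intro mult_right_mono) auto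
    then show ?thesis using sum_pi by (simp add: cc_def mult.assoc)
  qed
  finally show ?thesis .
qed


definition dst :: "(nat\<times>nat\<Rightarrow>int) \<Rightarrow> (nat\<times>nat\<Rightarrow>int) \<Rightarrow> nat" where
  "dst y x = (\<Sum>s\<in>strata m. nat \<bar>x s - y s\<bar>)"

lemma dst_up:
  assumes s0: "s0 \<in> strata m" and lt: "x s0 < y s0"
  shows "dst y x = Suc (dst y (up x s0))"
proof -
  have "dst y x = (\<Sum>s\<in>strata m. nat \<bar>up x s0 s - y s\<bar> + (if s = s0 then 1 else 0))"
    unfolding dst_def using lt by (intro sum.cong) (auto simp: up_def)
  also have "\<dots> = Suc (dst y (up x s0))" using s0 by (simp add: sum.distrib dst_def)
  finally show ?thesis .
qed

lemma dst_dn: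
  assumes s0: "s0 \<in> strata m" and lt: "x s0 > y s0"
  shows "dst y x = Suc (dst y (dn x s0))"
proof -
  have "dst y x = (\<Sum>s\<in>strata m. nat \<bar>dn x s0 s - y s\<bar> + (if s = s0 then 1 else 0))"
    unfolding dst_def using lt by (intro sum.cong) (auto simp: dn_def)
  also have "\<dots> = Suc (dst y (dn x s0))" using s0 by (simp add: sum.distrib dst_def)
  finally show ?thesis .
qed

lemma G_eq: "x \<in> G \<Longrightarrow> y \<in> G \<Longrightarrow> \<forall>s\<in>strata m. x s = y s \<Longrightarrow> x = y"
proof (rule ext)
  fix s assume "x \<in> G" "y \<in> G" "\<forall>s\<in>strata m. x s = y s"
  then show "x s = y s" unfolding G_def by (cases s) auto
qed

lemma dst_zero: "x \<in> G \<Longrightarrow> y \<in> G \<Longrightarrow> dst y x = 0 \<Longrightarrow> x = y"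
  unfolding dst_def by (rule G_eq) auto

lemma dst_self: "dst y y = 0"
  by (simp add: dst_def)

lemma dst_up_self: "s0 \<in> strata m \<Longrightarrow> dst y (up y s0) = 1"
  using dst_up[of s0 "up y s0" y] 
proof -
  assume s0: "s0 \<in> strata m"
  have "dst y (up y s0) = (\<Sum>s\<in>strata m. (if s = s0 then 1 else 0))"
    unfolding dst_def by (intro sum.cong) (auto simp: up_def)
  then show ?thesis using s0 by simp
qed

lemma reach:
  assumes y: "y \<in> G"
  shows "x \<in> G \<Longrightarrow> dst y x = L \<Longrightarrow> (if x = y then 0 else r y L x) \<le> 1 - cc ^ L"
proof (induction L arbitrary: x)
  case 0 then show ?case using dst_zero[OF _ y] by auto
next
  case (Suc L)
  have xy: "x \<noteq> y" using Suc.prems dst_self by auto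
  then have "\<exists>s0\<in>strata m. x s0 \<noteq> y s0" using G_eq[OF Suc.prems(1) y] by blast
  then obtain s0 where s0: "s0 \<in> strata m" "x s0 \<noteq> y s0" by blast
  have f1: "\<forall>z\<in>G. r y L z \<le> 1" using r_bounds by blast
  have a: "0 \<le> cc ^ L" using cc_pos by simp
  have "r y (Suc L) x \<le> 1 - cc * cc ^ L"
    unfolding r_Suc
  proof (rule Qsum_bound[OF Suc.prems(1) s0(1) f1 a])
    show "(if up x s0 = y then 0 else r y L (up x s0)) \<le> 1 - cc ^ L \<or>
          (if dn x s0 = y then 0 else r y L (dn x s0)) \<le> 1 - cc ^ L"
    proof (cases "x s0 < y s0")
      case True
      then have "dst y (up x s0) = L" using dst_up[OF s0(1)] Suc.prems by simp
      then show ?thesis using Suc.IH[OF up_G[OF Suc.prems(1) s0(1)]] by blast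
    next
      case False
      then have "x s0 > y s0" using s0 by simp
      then have "dst y (dn x s0) = L" using dst_dn[OF s0(1)] Suc.prems by simp
      then show ?thesis using Suc.IH[OF dn_G[OF Suc.prems(1) s0(1)]] by blast
    qed
  qed
  then show ?case using xy by simp
qed

definition "kk y = card (strata m) * Rn + (\<Sum>s\<in>strata m. nat \<bar>y s\<bar>) + 2"

lemma r_C:
  assumes y: "y \<in> G" and x: "x \<in> G" and xC: "x \<in> C"
  shows "r y (kk y) x \<le> 1 - cc ^ kk y"
proof (cases "x = y")
  case True
  let ?z = "up y (1,1)"
  have z: "?z \<in> G" "dst y ?z = Suc 0" using up_G[OF y strata_ne] dst_up_self[OF strata_ne] by auto
  have rz: "(if ?z = y then 0 else r y (Suc 0) ?z) \<le> 1 - cc ^ Suc 0" by (rule reach[OF y z])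
  have f1: "\<forall>z\<in>G. r y (Suc 0) z \<le> 1" using r_bounds by blast
  have "r y (Suc (Suc 0)) y \<le> 1 - cc * cc"
    unfolding r_Suc[of y "Suc 0"]
    using Qsum_bound[OF y strata_ne f1, of cc y] rz cc_pos by simp
  moreover have "r y (kk y) y \<le> r y (Suc (Suc 0)) y" using r_antimono[OF y] by (simp add: kk_def)
  moreover have "cc ^ kk y \<le> cc ^ Suc (Suc 0)" using cc_pos cc_le1 by (intro power_decreasing) (auto simp: kk_def)
  ultimately show ?thesis using True by simp
next
  case False
  define L where "L = dst y x"
  have L1: "L \<noteq> 0" using dst_zero[OF x y] False L_def by auto
  have "L \<le> (\<Sum>s\<in>strata m. Rn + nat \<bar>y s\<bar>)" unfolding L_def dst_def
    using xC by (intro sum_mono) (auto simp: C_def)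
  then have Lk: "L \<le> kk y" by (simp add: kk_def sum.distrib)
  have "r y (kk y) x \<le> r y L x" using r_antimono[OF x Lk] .
  also have "\<dots> \<le> 1 - cc ^ L" using reach[OF y x L_def[symmetric]] False by simp
  also have "\<dots> \<le> 1 - cc ^ kk y" using cc_pos cc_le1 Lk by (simp add: power_decreasing)
  finally show ?thesis .
qed


lemma Qn_r: "(Q y ^^ n) (r y k) = r y (n + k)"
  by (simp add: r_def funpow_add)

lemma indC_le:
  assumes y: "y \<in> G" and x: "x \<in> G"
  shows "indC x \<le> (1 / cc ^ kk y) * 1 + (- (1 / cc ^ kk y)) * r y (kk y) x"
proof -
  have d: "0 < cc ^ kk y" using cc_pos by simp
  have "indC x \<le> (1 - r y (kk y) x) / cc ^ kk y"
  proof (cases "x \<in> C")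
    case True
    then have "cc ^ kk y \<le> 1 - r y (kk y) x" using r_C[OF y x] by simp
    then show ?thesis using True d by (simp add: indC_def)
  next
    case False
    then show ?thesis using r_bounds[OF x] d by (simp add: indC_def)
  qed
  then show ?thesis by (simp add: diff_divide_distrib)
qed

lemma Qn_indC:
  assumes y: "y \<in> G" and x: "x \<in> G"
  shows "(Q y ^^ n) indC x \<le> (1 / cc ^ kk y) * r y n x - (1 / cc ^ kk y) * r y (n + kk y) x"
proof -
  let ?a = "1 / cc ^ kk y"
  have "(Q y ^^ n) indC x \<le> (Q y ^^ n) (\<lambda>z. ?a * (\<lambda>_. 1) z + (- ?a) * r y (kk y) z) x"
    using indC_le[OF y] x by (intro Qn_mono) auto
  also have "\<dots> = ?a * r y n x - ?a * r y (n + kk y) x"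
    unfolding Qn_lin Qn_r by (simp add: r_def)
  finally show ?thesis .
qed

lemma tele:
  "(\<Sum>n<N. r y n x - r y (n + k) x) = (\<Sum>j<k. r y j x - r y (N + j) x)"
proof (induction N)
  case 0 then show ?case by simp
next
  case (Suc N)
  have t: "(\<Sum>j<k. r y (N + j) x - r y (N + Suc j) x) = r y N x - r y (N + k) x"
    using sum_lessThan_telescope'[of "\<lambda>j. r y (N + j) x" k] by simp
  have "(\<Sum>n<Suc N. r y n x - r y (n + k) x) = (\<Sum>j<k. r y j x - r y (N + j) x) + (r y N x - r y (N + k) x)"
    using Suc by simp
  also have "\<dots> = (\<Sum>j<k. r y j x - r y (N + j) x) + (\<Sum>j<k. r y (N + j) x - r y (N + Suc j) x)"
    using t by simp
  also have "\<dots> = (\<Sum>j<k. r y j x - r y (Suc N + j) x)"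
    by (simp add: sum.distrib[symmetric])
  finally show ?case .
qed

lemma tele_le:
  assumes x: "x \<in> G"
  shows "(\<Sum>n<N. r y n x - r y (n + k) x) \<le> real k"
proof -
  have "(\<Sum>n<N. r y n x - r y (n + k) x) = (\<Sum>j<k. r y j x - r y (N + j) x)" by (rule tele)
  also have "\<dots> \<le> (\<Sum>j<k. 1)" using r_bounds[OF x] by (intro sum_mono) (smt (verit))
  finally show ?thesis by simp
qed

lemma F3:
  "x \<in> G \<Longrightarrow> (\<Sum>n<N. r y n x) + (Q y ^^ N) V x \<le> V x + 2 * (\<Sum>n<N. (Q y ^^ n) indC x)"
proof (induction N arbitrary: x)
  case 0 then show ?case by simp
next
  case (Suc N)
  have "(Q y ^^ Suc N) V x = (Q y ^^ N) (Q y V) x" by (simp only: funpow_Suc_right o_apply)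
  also have "\<dots> \<le> (Q y ^^ N) (\<lambda>z. 1 * V z + 1 * ((-1) * (\<lambda>_. 1) z + 2 * indC z)) x"
  proof (rule Qn_mono[OF _ Suc.prems])
    show "\<forall>z\<in>G. Q y V z \<le> 1 * V z + 1 * ((-1) * (\<lambda>_. 1) z + 2 * indC z)"
    proof
      fix z have "Q y V z \<le> V z - 1 + 2 * indC z" by (rule drift)
      then show "Q y V z \<le> 1 * V z + 1 * ((-1) * (\<lambda>_. 1) z + 2 * indC z)" by simp
    qed
  qed
  also have "\<dots> = (Q y ^^ N) V x - r y N x + 2 * (Q y ^^ N) indC x"
    unfolding Qn_lin by (simp add: r_def)
  finally show ?case using Suc.IH[OF Suc.prems] by simp
qed

lemma sum_r_bounded:
  assumes y: "y \<in> G"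
  shows "(\<Sum>n<N. r y n y) \<le> V y + 2 * (real (kk y) / cc ^ kk y)"
proof -
  let ?a = "1 / cc ^ kk y"
  have a: "0 \<le> ?a" using cc_pos by simp
  have "(\<Sum>n<N. (Q y ^^ n) indC y) \<le> (\<Sum>n<N. ?a * (r y n y - r y (n + kk y) y))"
    using Qn_indC[OF y y] by (intro sum_mono) (simp add: right_diff_distrib)
  also have "\<dots> = ?a * (\<Sum>n<N. r y n y - r y (n + kk y) y)" by (simp add: sum_distrib_left)
  also have "\<dots> \<le> ?a * real (kk y)" using a tele_le[OF y] by (intro mult_left_mono) auto
  finally have h: "(\<Sum>n<N. (Q y ^^ n) indC y) \<le> real (kk y) / cc ^ kk y" by simp
  have "0 \<le> (Q y ^^ N) V y"
  proof -
    have "(Q y ^^ N) (\<lambda>_. 0) y \<le> (Q y ^^ N) V y" using y V_nonneg by (intro Qn_mono) auto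
    moreover have "(Q y ^^ N) (\<lambda>_. 0) = (\<lambda>_. 0)"
    proof -
      have Q0: "Q y (\<lambda>_. 0) = (\<lambda>_. 0)" by (rule ext) (simp add: Q_eq)
      show ?thesis by (induction N) (simp_all add: Q0)
    qed
    ultimately show ?thesis by simp
  qed
  then show ?thesis using F3[OF y, where N=N and y=y] h by linarith
qed

lemma pos_rec: 
  assumes y: "y \<in> G"
  shows "pos_recurrent_state K y"
proof -
  define B where "B = V y + 2 * (real (kk y) / cc ^ kk y)"
  have bnd: "(\<Sum>n<N. r y n y) \<le> B" for N unfolding B_def by (rule sum_r_bounded[OF y])
  have B0: "0 \<le> B" using bnd[of 0] by simp
  have rb: "0 \<le> r y n y" "r y n y \<le> 1" "r y (Suc n) y \<le> r y n y" for n
    using r_bounds[OF y] r_dec[OF y] by auto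
  have summ: "summable (\<lambda>n. r y n y)"
    by (rule summableI_nonneg_bounded[where x=B]) (use rb bnd in auto)
  have r0: "(\<lambda>n. r y n y) \<longlonglongrightarrow> 0" by (rule summable_LIMSEQ_zero[OF summ])
  define f where "f n = first_hit K n y y" for n
  have fS: "f (Suc n) = r y n y - r y (Suc n) y" for n unfolding f_def by (rule first_hit_r)
  have f0: "f 0 = 0" by (simp add: f_def)
  have ps: "(\<Sum>i<Suc N. f i) = 1 - r y N y" for N
    by (induction N) (simp_all add: f0 fS r_def)
  have "(\<lambda>N. \<Sum>i<Suc N. f i) \<longlonglongrightarrow> 1"
    unfolding ps using tendsto_diff[OF tendsto_const r0, of 1] by simp
  then have s1: "f sums 1" unfolding sums_def by (subst (asm) filterlim_sequentially_Suc)
  have psn: "(\<Sum>i<Suc N. real i * f i) = (\<Sum>j<N. r y j y) - real N * r y N y" for N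
    by (induction N) (simp_all add: f0 fS algebra_simps)
  have fnn: "0 \<le> real i * f i" for i
    by (cases i) (use rb in \<open>simp_all add: f0 fS\<close>)
  have "summable (\<lambda>i. real i * f i)"
  proof (rule summableI_nonneg_bounded[where x=B])
    fix n show "0 \<le> real n * f n" by (rule fnn)
    show "(\<Sum>i<n. real i * f i) \<le> B"
    proof (cases n)
      case 0 then show ?thesis using B0 by simp
    next
      case (Suc N)
      have "0 \<le> real N * r y N y" using rb by simp
      then show ?thesis unfolding Suc psn using bnd[of N] by linarith
    qed
  qed
  then show ?thesis using s1 unfolding pos_recurrent_state_def f_def by simp
qed

lemma K_G: "x \<in> G \<Longrightarrow> z \<in> set_pmf (K x) \<Longrightarrow> z \<in> G"
  using up_G[of x] dn_G[of x] unfolding car_kernel_def up_def dn_def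
  by (auto simp: supp split: if_splits)

lemma nstep_G: "x \<in> G \<Longrightarrow> z \<in> set_pmf (n_step K n x) \<Longrightarrow> z \<in> G"
proof (induction n arbitrary: z)
  case 0 then show ?case by simp
next
  case (Suc n) then show ?case using K_G by auto
qed

lemma chain: "pos_recurrent_chain K (\<lambda>_. 0)"
  unfolding pos_recurrent_chain_def
proof (intro allI impI)
  fix y assume "\<exists>n\<ge>1. 0 < pmf (n_step K n (\<lambda>_. 0)) y"
  then obtain n where "0 < pmf (n_step K n (\<lambda>_. 0)) y" by blast
  then have "y \<in> set_pmf (n_step K n (\<lambda>_. 0))" by (simp add: set_pmf_iff)
  moreover have "(\<lambda>_. 0) \<in> G" by (simp add: G_def)
  ultimately have "y \<in> G" using nstep_G by blast
  then show "pos_recurrent_state K y" by (rule pos_rec)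
qed

end

lemma subsets12: "{S. S \<subseteq> {1,2::nat} \<and> S \<noteq> {}} = {{1},{2},{1,2}}"
proof -
  have "{S. S \<subseteq> {1,2::nat}} = Pow {1,2}" by auto
  also have "\<dots> = {{}, {1}, {2}, {1,2}}" by (simp add: Pow_insert insert_commute)
  finally show ?thesis by auto
qed

theorem corollary2:
  fixes m :: "nat \<Rightarrow> nat" and wo ws p q :: real and wm :: "nat \<Rightarrow> real"
    and \<pi> :: "(nat \<times> nat) pmf"
  assumes m1: "m 1 > 1" and m2: "m 2 > 1"
    and w_nonneg: "wo \<ge> 0" "wm 1 \<ge> 0" "wm 2 \<ge> 0" "ws \<ge> 0"
    and w_sum: "wo + wm 1 + wm 2 + ws = 1"
    and pq: "0 < q" "q < p" "p < 1" "p + q = 1"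
    and \<pi>_supp: "set_pmf \<pi> = strata m"
  shows "(u_star wo wm m < 1/2 \<longleftrightarrow>
           (real (m 1 * m 2) - 1) * wo + (real (m 1) - 1) * wm 2 + (real (m 2) - 1) * wm 1 < 1/2)
       \<and> ((real (m 1 * m 2) - 1) * wo + (real (m 1) - 1) * wm 2 + (real (m 2) - 1) * wm 1 < 1/2
           \<longrightarrow> pos_recurrent_chain (car_kernel p q wo wm ws m \<pi>) (\<lambda>_. 0))"
proof
  have "u_star wo wm m = (wo + wm 2) * (real (m 1) - 1) + (wo + wm 1) * (real (m 2) - 1)
      + wo * ((real (m 1) - 1) * (real (m 2) - 1))"
    unfolding u_star_def subsets12 by (simp add: insert_Diff_if)
  also have "\<dots> = (real (m 1 * m 2) - 1) * wo + (real (m 1) - 1) * wm 2 + (real (m 2) - 1) * wm 1"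
    by (simp add: algebra_simps)
  finally show "u_star wo wm m < 1/2 \<longleftrightarrow>
           (real (m 1 * m 2) - 1) * wo + (real (m 1) - 1) * wm 2 + (real (m 2) - 1) * wm 1 < 1/2"
    by simp
next
  show "(real (m 1 * m 2) - 1) * wo + (real (m 1) - 1) * wm 2 + (real (m 2) - 1) * wm 1 < 1/2
           \<longrightarrow> pos_recurrent_chain (car_kernel p q wo wm ws m \<pi>) (\<lambda>_. 0)"
  proof
    assume cond: "(real (m 1 * m 2) - 1) * wo + (real (m 1) - 1) * wm 2 + (real (m 2) - 1) * wm 1 < 1/2"
    have "2 * 2 \<le> m 1 * m 2" using m1 m2 by (intro mult_le_mono) auto
    then have c0: "1 \<le> real (m 1 * m 2) - 1" by linarith
    have c1: "1 \<le> real (m 1) - 1" "1 \<le> real (m 2) - 1" using m1 m2 by auto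
    have "wo \<le> (real (m 1 * m 2) - 1) * wo" using c0 w_nonneg by (simp add: mult_le_cancel_right1)
    moreover have "wm 2 \<le> (real (m 1) - 1) * wm 2" using c1 w_nonneg by (simp add: mult_le_cancel_right1)
    moreover have "wm 1 \<le> (real (m 2) - 1) * wm 1" using c1 w_nonneg by (simp add: mult_le_cancel_right1)
    ultimately have ws_pos: "ws > 0" using cond w_sum by linarith
    interpret car p q wo ws wm m \<pi>
      by unfold_locales (use m1 m2 w_nonneg ws_pos w_sum pq \<pi>_supp in auto)
    show "pos_recurrent_chain (car_kernel p q wo wm ws m \<pi>) (\<lambda>_. 0)" by (rule chain)
  qed
qed

end
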